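(* Let $\xi\in\mathbb{R}$, let $n\ge 2$, $t_1<\dots<t_n$, $\Delta:=\max_{1\le j\le n-1}(t_{j+1}-t_j)$, and let $F\in C^4[t_1,t_n]$. Let $I_4(F)$ be an exponential spline of order $4$ for the operator $L_{(\xi,\xi,-\xi,-\xi)}=\left(\frac{d^2}{dt^2}-\xi^2\right)^2$ with knots $t_1,\dots,t_n$ satisfying $I_4(F)(t_j)=F(t_j)$ for $j=1,\dots,n$, $\frac{d}{dt}I_4(F)(t_1)=F'(t_1)$ and $\frac{d}{dt}I_4(F)(t_n)=F'(t_n)$. Then $$\max_{t\in[t_1,t_n]}|F(t)-I_4(F)(t)|\le \frac{5}{64}\,\Delta^4\max_{\theta\in[t_1,t_n]}\left|L_{(\xi,\xi,-\xi,-\xi)}F(\theta)\right|.$$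
   Context: For real $\lambda_0,\dots,\lambda_N$, $L_{(\lambda_0,\dots,\lambda_N)}=\prod_{j=0}^N\left(\frac{d}{dt}-\lambda_j\right)$ and $E(\lambda_0,\dots,\lambda_N)=\{f\in C^{N+1}(\mathbb{R}):L_{(\lambda_0,\dots,\lambda_N)}f=0\}$. An exponential spline for the knots $t_1<\dots<t_n$ and the operator $L_{(\lambda_0,\dots,\lambda_N)}$ is a function $g\in C^{N-1}[t_1,t_n]$ whose restriction to each interval $[t_j,t_{j+1}]$ coincides with an element of $E(\lambda_0,\dots,\lambda_N)$. *)

theory Defs
  imports "HOL-Analysis.Analysis"
begin

definition deriv_chain :: "nat \<Rightarrow> real set \<Rightarrow> (real \<Rightarrow> real) \<Rightarrow> (nat \<Rightarrow> real \<Rightarrow> real) \<Rightarrow> bool" where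
  "deriv_chain k S f D \<longleftrightarrow>
     (\<forall>x\<in>S. D 0 x = f x) \<and>
     (\<forall>i<k. \<forall>x\<in>S. (D i has_real_derivative D (Suc i) x) (at x within S)) \<and>
     continuous_on S (D k)"

definition Ck :: "nat \<Rightarrow> real set \<Rightarrow> (real \<Rightarrow> real) \<Rightarrow> bool" where
  "Ck k S f \<longleftrightarrow> (\<exists>D. deriv_chain k S f D)"

text \<open>Applying the operator (d/dt - l_0)...(d/dt - l_N) to a derivative chain D:
  Lchain ls D i is the i-th derivative of L_ls f.  The value L_ls f is Lchain ls D 0.\<close>
fun Lchain :: "real list \<Rightarrow> (nat \<Rightarrow> real \<Rightarrow> real) \<Rightarrow> nat \<Rightarrow> real \<Rightarrow> real" where
  "Lchain [] D = D"
| "Lchain (l # ls) D = (\<lambda>i t. Lchain ls D (Suc i) t - l * Lchain ls D i t)"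

definition Espace :: "real list \<Rightarrow> (real \<Rightarrow> real) \<Rightarrow> bool" where
  "Espace ls f \<longleftrightarrow> (\<exists>D. deriv_chain (length ls) UNIV f D \<and> (\<forall>t. Lchain ls D 0 t = 0))"

definition exp_spline :: "real list \<Rightarrow> (nat \<Rightarrow> real) \<Rightarrow> nat \<Rightarrow> (real \<Rightarrow> real) \<Rightarrow> bool" where
  "exp_spline ls ts n g \<longleftrightarrow>
     Ck (length ls - 2) {ts 1..ts n} g \<and>
     (\<forall>j. 1 \<le> j \<and> j < n \<longrightarrow> (\<exists>h. Espace ls h \<and> (\<forall>t\<in>{ts j..ts (Suc j)}. g t = h t)))"

end

theory Submission
  imports Defs
begin


lemma sinh_le_mul_cosh:
  fixes z :: real assumes "z \<ge> 0" shows "sinh z \<le> z * cosh z"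
proof -
  have "(\<lambda>t. t * cosh t - sinh t) 0 \<le> (\<lambda>t. t * cosh t - sinh t) z"
  proof (rule DERIV_nonneg_imp_increasing_open[OF assms])
    fix x :: real assume "0 < x" "x < z"
    show "\<exists>y. ((\<lambda>t. t * cosh t - sinh t) has_real_derivative y) (at x) \<and> y \<ge> 0"
      by (rule exI[of _ "x * sinh x"]) (auto intro!: derivative_eq_intros simp: \<open>0<x\<close> less_imp_le)
  next
    show "continuous_on {0..z} (\<lambda>t. t * cosh t - sinh t)"
      by (intro continuous_intros)
  qed
  then show ?thesis by simp
qed

lemma sinh_gt_self:
  fixes z :: real assumes "z > 0" shows "z < sinh z"
proof -
  have "(\<lambda>t. sinh t - t) 0 < (\<lambda>t. sinh t - t) z"
  proof (rule DERIV_pos_imp_increasing_open[OF assms])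
    fix x :: real assume x: "0 < x" "x < z"
    have "cosh x > 1"
    proof -
      have "cosh x ^ 2 = sinh x ^ 2 + 1" by (rule cosh_square_eq)
      moreover have "sinh x > 0" using x by simp
      ultimately have "cosh x ^ 2 > 1" by (simp add: power2_eq_square)
      then show ?thesis using cosh_real_pos[of x]
        by (smt (verit) power_le_one)
    qed
    then show "\<exists>y. ((\<lambda>t. sinh t - t) has_real_derivative y) (at x) \<and> y > 0"
      by (intro exI[of _ "cosh x - 1"]) (auto intro!: derivative_eq_intros)
  next
    show "continuous_on {0..z} (\<lambda>t. sinh t - t)"
      by (intro continuous_intros)
  qed
  then show ?thesis by simp
qed

lemma cosh_key_ineq:
  fixes x :: real shows "4 * (cosh x - 1) \<le> x\<^sup>2 * (cosh x + 1)"
proof -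
  define z where "z = \<bar>x\<bar> / 2"
  have z0: "z \<ge> 0" by (simp add: z_def)
  have cx: "cosh x = cosh (2*z)"
    by (cases "x \<ge> 0") (auto simp: z_def)
  have x2: "x\<^sup>2 = 4 * z\<^sup>2" by (simp add: z_def power2_eq_square)
  have "sinh z \<le> z * cosh z" by (rule sinh_le_mul_cosh[OF z0])
  moreover have "0 \<le> sinh z" using z0 by simp
  ultimately have "(sinh z)\<^sup>2 \<le> (z * cosh z)\<^sup>2" by (rule power_mono)
  then have "(sinh z)\<^sup>2 \<le> z\<^sup>2 * (cosh z)\<^sup>2" by (simp add: power_mult_distrib)
  moreover have "cosh (2*z) - 1 = 2 * (sinh z)\<^sup>2" by (simp add: cosh_double cosh_square_eq)
  moreover have "cosh (2*z) + 1 = 2 * (cosh z)\<^sup>2" by (simp add: cosh_double cosh_square_eq)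
  ultimately show ?thesis by (simp add: cx x2)
qed




lemma second_deriv_test:
  fixes f f1 f2 :: "real \<Rightarrow> real"
  assumes "a < c" "c < b"
    and d1: "\<And>y. a < y \<Longrightarrow> y < b \<Longrightarrow> (f has_real_derivative f1 y) (at y)"
    and d2: "\<And>y. a < y \<Longrightarrow> y < b \<Longrightarrow> (f1 has_real_derivative f2 y) (at y)"
    and mx: "\<And>y. a < y \<Longrightarrow> y < b \<Longrightarrow> f y \<le> f c"
  shows "f2 c \<le> 0"
proof (rule ccontr)
  assume "\<not> f2 c \<le> 0"
  then have pos: "f2 c > 0" by simp
  have "f1 c = 0"
  proof (rule DERIV_local_max[OF d1[OF assms(1,2)]])
    show "0 < min (c - a) (b - c)" using assms by simp
    show "\<forall>y. \<bar>c - y\<bar> < min (c - a) (b - c) \<longrightarrow> f y \<le> f c"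
      by (auto intro!: mx)
  qed
  obtain d where d: "d > 0" "\<And>h. h > 0 \<Longrightarrow> h < d \<Longrightarrow> f1 c < f1 (c + h)"
    using DERIV_pos_inc_right[OF d2[OF assms(1,2)] pos] by blast
  define t where "t = min d (b - c) / 2"
  have t: "t > 0" "t < d" "c + t < b" using d assms by (auto simp: t_def min_def field_simps)
  obtain z where z: "c < z" "z < c + t" "f (c + t) - f c = (c + t - c) * f1 z"
  proof -
    have "\<exists>z. c < z \<and> z < c + t \<and> f (c + t) - f c = (c + t - c) * f1 z"
    proof (rule MVT2)
      show "c < c + t" using t by simp
      fix x assume "c \<le> x" "x \<le> c + t"
      then show "(f has_real_derivative f1 x) (at x)" using t assms by (intro d1) auto
    qed
    then show ?thesis using that by blast
  qed
  have "f1 z > 0" using d(2)[of "z - c"] z t \<open>f1 c = 0\<close> by auto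
  then have "f (c + t) > f c" using z t by (simp add: algebra_simps)
  moreover have "f (c + t) \<le> f c" using t assms by (intro mx) auto
  ultimately show False by simp
qed

lemma max_principle:
  fixes u0 u1 u2 :: "real \<Rightarrow> real" and c a b :: real
  assumes "a < b" and "c \<ge> 0"
    and d1: "\<And>y. y \<in> {a..b} \<Longrightarrow> (u0 has_real_derivative u1 y) (at y within {a..b})"
    and d2: "\<And>y. y \<in> {a..b} \<Longrightarrow> (u1 has_real_derivative u2 y) (at y within {a..b})"
    and P: "\<And>y. a < y \<Longrightarrow> y < b \<Longrightarrow> u2 y \<ge> c * u0 y"
    and ua: "u0 a \<le> 0" and ub: "u0 b \<le> 0"
    and y: "y \<in> {a..b}"
  shows "u0 y \<le> 0"
proof (rule ccontr)
  assume "\<not> u0 y \<le> 0"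
  then have uy: "u0 y > 0" by simp
  define \<epsilon> where "\<epsilon> = u0 y / (b - a)\<^sup>2"
  have eps: "\<epsilon> > 0" using uy assms by (simp add: \<epsilon>_def)
  define v where "v = (\<lambda>t. u0 t + \<epsilon> * ((t - a) * (t - b)))"
  define v1 where "v1 = (\<lambda>t. u1 t + \<epsilon> * (2 * t - a - b))"
  define v2 where "v2 = (\<lambda>t. u2 t + 2 * \<epsilon>)"
  have vd1: "(v has_real_derivative v1 t) (at t within {a..b})" if "t \<in> {a..b}" for t
    unfolding v_def v1_def
    by (auto intro!: derivative_eq_intros d1[OF that] simp: algebra_simps)
  have vd2: "(v1 has_real_derivative v2 t) (at t within {a..b})" if "t \<in> {a..b}" for t
    unfolding v2_def v1_def
    by (auto intro!: derivative_eq_intros d2[OF that] simp: algebra_simps)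
  have "continuous_on {a..b} v" by (rule DERIV_continuous_on[OF vd1])
  moreover have "{a..b} \<noteq> {}" using assms by simp
  ultimately have "\<exists>m\<in>{a..b}. \<forall>t\<in>{a..b}. v t \<le> v m"
    using continuous_attains_sup[OF compact_Icc] by blast
  then obtain m where m: "m \<in> {a..b}" "\<And>t. t \<in> {a..b} \<Longrightarrow> v t \<le> v m"
    by blast
  have "(y - a) * (y - b) \<ge> - (b - a)\<^sup>2 / 4"
  proof -
    have "0 \<le> (2*y - a - b)^2" by simp
    then show ?thesis by (simp add: power2_eq_square algebra_simps divide_simps)
  qed
  hence "\<epsilon> * ((y - a) * (y - b)) \<ge> \<epsilon> * (- (b - a)\<^sup>2 / 4)"
    using eps by (intro mult_left_mono) auto
  moreover have "\<epsilon> * (- (b - a)\<^sup>2 / 4) = - u0 y / 4" using assms by (simp add: \<epsilon>_def)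
  ultimately have "v y > 0" using uy by (simp add: v_def)
  then have vm: "v m > 0" using m y by force
  have "v a \<le> 0" "v b \<le> 0" using ua ub by (auto simp: v_def)
  then have mab: "a < m" "m < b" using vm m(1) by (auto simp: less_le)
  have "v2 m \<le> 0"
  proof (rule second_deriv_test[OF mab])
    fix t assume t: "a < t" "t < b"
    then show "(v has_real_derivative v1 t) (at t)" "(v1 has_real_derivative v2 t) (at t)"
      using vd1[of t] vd2[of t] by (auto simp: at_within_Icc_at)
    show "v t \<le> v m" using m t by auto
  qed
  moreover have "u0 m \<ge> v m"
  proof -
    have "(m - a) * (m - b) \<le> 0" using mab by (intro mult_nonneg_nonpos) auto
    then show ?thesis using eps by (simp add: v_def mult_le_0_iff)
  qed
  then have "u0 m > 0" using vm by simp
  then have "u2 m \<ge> 0" using P[OF mab] \<open>c \<ge> 0\<close> by (smt (verit) mult_nonneg_nonneg)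
  then have "v2 m > 0" using eps by (simp add: v2_def)
  ultimately show False by simp
qed




lemma mono_within:
  fixes W W1 :: "real \<Rightarrow> real"
  assumes "a \<le> b"
    and d: "\<And>y. y \<in> {a..b} \<Longrightarrow> (W has_real_derivative W1 y) (at y within {a..b})"
    and nn: "\<And>y. y \<in> {a..b} \<Longrightarrow> W1 y \<ge> 0"
  shows "W a \<le> W b"
proof (rule DERIV_nonneg_imp_increasing_open[OF assms(1)])
  fix x assume x: "a < x" "x < b"
  then show "\<exists>y. (W has_real_derivative y) (at x) \<and> 0 \<le> y"
    using d[of x] nn[of x] by (auto simp: at_within_Icc_at)
next
  show "continuous_on {a..b} W" by (rule DERIV_continuous_on[OF d])
qed

lemma core:
  fixes e :: "nat \<Rightarrow> real \<Rightarrow> real" and K K1 \<Phi> \<Phi>1 \<Psi> :: "real \<Rightarrow> real"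
  assumes "a < b"
    and ch: "\<And>i y. i < 4 \<Longrightarrow> y \<in> {a..b} \<Longrightarrow> (e i has_real_derivative e (Suc i) y) (at y within {a..b})"
    and dK: "\<And>y. (K has_real_derivative K1 y) (at y)"
    and dK1: "\<And>y. (K1 has_real_derivative \<xi>^2 * K y) (at y)"
    and dP: "\<And>y. (\<Phi> has_real_derivative \<Phi>1 y) (at y)"
    and dP1: "\<And>y. (\<Phi>1 has_real_derivative \<xi>^2 * \<Phi> y + K y) (at y)"
    and dS: "\<And>y. (\<Psi> has_real_derivative \<Phi> y) (at y)"
    and Ka: "K a = 1" and Kb: "K b = 0" and Pa: "\<Phi> a = 0" and Pb: "\<Phi> b = 0"
    and Pneg: "\<And>y. y \<in> {a..b} \<Longrightarrow> \<Phi> y \<le> 0"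
    and ea: "e 0 a = 0" and eb: "e 0 b = 0"
    and fb: "\<And>y. y \<in> {a..b} \<Longrightarrow> e 4 y - 2 * \<xi>^2 * e 2 y + \<xi>^4 * e 0 y \<le> M"
  shows "e 1 a \<le> \<Phi>1 a * (e 2 a - \<xi>^2 * e 0 a) - \<Phi>1 b * (e 2 b - \<xi>^2 * e 0 b) + M * (\<Psi> a - \<Psi> b)"
proof -
  define W where "W = (\<lambda>y. K y * e 1 y - K1 y * e 0 y + \<Phi> y * (e 3 y - \<xi>^2 * e 1 y)
      - \<Phi>1 y * (e 2 y - \<xi>^2 * e 0 y) - M * \<Psi> y)"
  define W1 where "W1 = (\<lambda>y. \<Phi> y * (e 4 y - 2 * \<xi>^2 * e 2 y + \<xi>^4 * e 0 y - M))"
  have W: "(W has_real_derivative W1 y) (at y within {a..b})" if y: "y \<in> {a..b}" for y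
  proof -
    have e0: "(e 0 has_real_derivative e 1 y) (at y within {a..b})" using ch[of 0 y] y by (simp add: numeral_eq_Suc)
    have e1: "(e 1 has_real_derivative e 2 y) (at y within {a..b})" using ch[of 1 y] y by (simp add: numeral_eq_Suc)
    have e2: "(e 2 has_real_derivative e 3 y) (at y within {a..b})" using ch[of 2 y] y by (simp add: numeral_eq_Suc)
    have e3: "(e 3 has_real_derivative e 4 y) (at y within {a..b})" using ch[of 3 y] y by (simp add: numeral_eq_Suc)
    have k: "(K has_real_derivative K1 y) (at y within {a..b})" "(K1 has_real_derivative \<xi>^2 * K y) (at y within {a..b})"
      "(\<Phi> has_real_derivative \<Phi>1 y) (at y within {a..b})" "(\<Phi>1 has_real_derivative \<xi>^2 * \<Phi> y + K y) (at y within {a..b})"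
      "(\<Psi> has_real_derivative \<Phi> y) (at y within {a..b})"
      using dK dK1 dP dP1 dS by (auto intro: has_field_derivative_at_within)
    show ?thesis unfolding W_def W1_def
      by (rule derivative_eq_intros e0 e1 e2 e3 k refl)+ (simp add: algebra_simps power2_eq_square power4_eq_xxxx)
  qed
  have "W a \<le> W b"
  proof (rule mono_within[OF less_imp_le[OF \<open>a<b\<close>] W])
    fix y assume y: "y \<in> {a..b}"
    show "W1 y \<ge> 0" unfolding W1_def using Pneg[OF y] fb[OF y]
      by (intro mult_nonpos_nonpos) auto
  qed
  then show ?thesis unfolding W_def using Ka Kb Pa Pb ea eb by (simp add: algebra_simps)
qed




definition testok where
  "testok \<xi> a b K K1 \<Phi> \<Phi>1 \<Psi> \<longleftrightarrow>
    (\<forall>y. (K has_real_derivative K1 y) (at y)) \<and>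
    (\<forall>y. (K1 has_real_derivative \<xi>^2 * K y) (at y)) \<and>
    (\<forall>y. (\<Phi> has_real_derivative \<Phi>1 y) (at y)) \<and>
    (\<forall>y. (\<Phi>1 has_real_derivative \<xi>^2 * \<Phi> y + K y) (at y)) \<and>
    (\<forall>y. (\<Psi> has_real_derivative \<Phi> y) (at y)) \<and>
    K a = 1 \<and> K b = 0 \<and> \<Phi> a = 0 \<and> \<Phi> b = 0 \<and> (\<forall>y\<in>{a..b}. K y \<ge> 0) \<and>
    -(\<Phi>1 a + \<Phi>1 b) > 0 \<and> \<Psi> a - \<Psi> b \<le> (b-a)^2/4 * (-(\<Phi>1 a + \<Phi>1 b))"

lemma testfun_zero:
  fixes a b :: real assumes ab: "a < b"
  shows "\<exists>K K1 \<Phi> \<Phi>1 \<Psi>. testok 0 a b K K1 \<Phi> \<Phi>1 \<Psi>"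
proof -
  define h where "h = b - a"
  have h: "h > 0" using ab by (simp add: h_def)
  have bh: "b = a + h" by (simp add: h_def)
  define K where "K = (\<lambda>y::real. (h - (y - a)) / h)"
  define K1 where "K1 = (\<lambda>y::real. - 1 / h)"
  define \<Phi> where "\<Phi> = (\<lambda>y::real. (y-a)^2/2 - (y-a)^3/(6*h) - h*(y-a)/3)"
  define \<Phi>1 where "\<Phi>1 = (\<lambda>y::real. (y-a) - (y-a)^2/(2*h) - h/3)"
  define \<Psi> where "\<Psi> = (\<lambda>y::real. (y-a)^3/6 - (y-a)^4/(24*h) - h*(y-a)^2/6)"
  have "testok 0 a b K K1 \<Phi> \<Phi>1 \<Psi>"
    unfolding testok_def
  proof (intro conjI allI ballI)
    fix y :: real
    show "(K has_real_derivative K1 y) (at y)" unfolding K_def K1_def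
      using h by (auto intro!: derivative_eq_intros)
    show "(K1 has_real_derivative 0^2 * K y) (at y)" unfolding K1_def
      by (auto intro!: derivative_eq_intros)
    show "(\<Phi> has_real_derivative \<Phi>1 y) (at y)" unfolding \<Phi>_def \<Phi>1_def
      using h by (auto intro!: derivative_eq_intros simp: field_simps power2_eq_square power3_eq_cube)
    show "(\<Phi>1 has_real_derivative 0^2 * \<Phi> y + K y) (at y)" unfolding \<Phi>_def \<Phi>1_def K_def
      using h by (auto intro!: derivative_eq_intros simp: field_simps power2_eq_square)
    show "(\<Psi> has_real_derivative \<Phi> y) (at y)" unfolding \<Phi>_def \<Psi>_def
      using h by (auto intro!: derivative_eq_intros simp: field_simps power2_eq_square power3_eq_cube)
  next
    fix y assume "y \<in> {a..b}"
    then show "K y \<ge> 0" using h by (simp add: K_def h_def)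
  next
    show "K a = 1" "K b = 0" "\<Phi> a = 0" using h by (auto simp: K_def \<Phi>_def h_def)
    show "\<Phi> b = 0" using h by (simp add: \<Phi>_def bh field_simps power2_eq_square power3_eq_cube)
    have "\<Phi>1 a = - h/3" "\<Phi>1 b = h/6" using h
      by (auto simp: \<Phi>1_def bh field_simps power2_eq_square)
    then have al: "-(\<Phi>1 a + \<Phi>1 b) = h/6" by simp
    have be: "\<Psi> a - \<Psi> b = h^3/24" using h
      by (simp add: \<Psi>_def bh field_simps power2_eq_square power3_eq_cube power4_eq_xxxx)
    show "-(\<Phi>1 a + \<Phi>1 b) > 0" using h al by simp
    show "\<Psi> a - \<Psi> b \<le> (b-a)^2/4 * (-(\<Phi>1 a + \<Phi>1 b))"
      unfolding al be using h by (simp add: bh power2_eq_square power3_eq_cube)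
  qed
  then show ?thesis by blast
qed




lemma testfun_nonzero:
  fixes a b \<xi> :: real assumes ab: "a < b" and xi: "\<xi> \<noteq> 0"
  shows "\<exists>K K1 \<Phi> \<Phi>1 \<Psi>. testok \<xi> a b K K1 \<Phi> \<Phi>1 \<Psi>"
proof -
  define h where "h = b - a"
  have h: "h > 0" using ab by (simp add: h_def)
  have bh: "b = a + h" by (simp add: h_def)
  define sh where "sh = sinh (\<xi> * h)"
  define ch where "ch = cosh (\<xi> * h)"
  have shnz: "sh \<noteq> 0" using xi h by (auto simp: sh_def)
  define K where "K = (\<lambda>y::real. sinh (\<xi> * (b - y)) / sh)"
  define K1 where "K1 = (\<lambda>y::real. - (\<xi> * cosh (\<xi> * (b - y))) / sh)"
  define \<Phi> where "\<Phi> = (\<lambda>y::real. - ((y - a) * cosh (\<xi> * (b - y))) / (2 * \<xi> * sh)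
                        + h * sinh (\<xi> * (y - a)) / (2 * \<xi> * sh^2))"
  define \<Phi>1 where "\<Phi>1 = (\<lambda>y::real. - (cosh (\<xi> * (b - y)) - \<xi> * (y - a) * sinh (\<xi> * (b - y))) / (2 * \<xi> * sh)
                        + h * cosh (\<xi> * (y - a)) / (2 * sh^2))"
  define \<Psi> where "\<Psi> = (\<lambda>y::real. (\<Phi>1 y + cosh (\<xi> * (b - y)) / (\<xi> * sh)) / \<xi>^2)"
  define P where "P = (sh - \<xi> * h) / (2 * \<xi> * sh^2)"
  have Ppos: "P > 0"
  proof -
    have q: "(sh - \<xi> * h) / \<xi> > 0"
    proof (cases "\<xi> > 0")
      case True
      then have "\<xi> * h < sh" unfolding sh_def using h by (intro sinh_gt_self) simp
      then show ?thesis using True by simp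
    next
      case False
      then have xn: "\<xi> < 0" using xi by simp
      then have "- (\<xi> * h) < sinh (- (\<xi> * h))" using h by (intro sinh_gt_self) (simp add: mult_neg_pos)
      then have "sh < \<xi> * h" by (simp add: sh_def)
      then show ?thesis using xn by (simp add: divide_neg_neg)
    qed
    have "P = ((sh - \<xi> * h) / \<xi>) / (2 * sh^2)" by (simp add: P_def field_simps)
    moreover have "((sh - \<xi> * h) / \<xi>) / (2 * sh^2) > 0"
      by (rule divide_pos_pos[OF q]) (use shnz in simp)
    ultimately show ?thesis by simp
  qed
  have "testok \<xi> a b K K1 \<Phi> \<Phi>1 \<Psi>"
    unfolding testok_def
  proof (intro conjI allI ballI)
    fix y :: real
    show "(K has_real_derivative K1 y) (at y)" unfolding K_def K1_def
      using shnz by (auto intro!: derivative_eq_intros simp: field_simps)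
    show "(K1 has_real_derivative \<xi>^2 * K y) (at y)" unfolding K1_def K_def
      using shnz by (auto intro!: derivative_eq_intros simp: field_simps power2_eq_square)
    show "(\<Phi> has_real_derivative \<Phi>1 y) (at y)" unfolding \<Phi>_def \<Phi>1_def
      using shnz xi by (auto intro!: derivative_eq_intros simp: field_simps power2_eq_square)
    show "(\<Phi>1 has_real_derivative \<xi>^2 * \<Phi> y + K y) (at y)" unfolding \<Phi>_def \<Phi>1_def K_def
      using shnz xi by (auto intro!: derivative_eq_intros simp: field_simps power2_eq_square)
    show "(\<Psi> has_real_derivative \<Phi> y) (at y)"
    proof -
      have d1: "(\<Phi>1 has_real_derivative \<xi>^2 * \<Phi> y + K y) (at y)" unfolding \<Phi>_def \<Phi>1_def K_def
        using shnz xi by (auto intro!: derivative_eq_intros simp: field_simps power2_eq_square)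
      show ?thesis unfolding \<Psi>_def
        using shnz xi by (auto intro!: derivative_eq_intros d1 simp: K_def field_simps power2_eq_square)
    qed
  next
    fix y assume y: "y \<in> {a..b}"
    show "K y \<ge> 0"
    proof (cases "\<xi> > 0")
      case True
      then show ?thesis using y h by (auto simp: K_def sh_def intro!: divide_nonneg_nonneg)
    next
      case False
      then have "\<xi> < 0" using xi by simp
      then show ?thesis using y h
        by (auto simp: K_def sh_def mult_nonpos_nonneg mult_neg_pos intro!: divide_nonpos_nonpos)
    qed
  next
    show "K a = 1" "K b = 0" "\<Phi> a = 0" "\<Phi> b = 0" using shnz xi
      by (auto simp: K_def \<Phi>_def bh sh_def field_simps power2_eq_square)
    have p1a: "\<Phi>1 a = - ch / (2*\<xi>* sh) + h / (2* sh^2)"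
      by (simp add: \<Phi>1_def bh ch_def)
    have p1b: "\<Phi>1 b = - 1 / (2*\<xi>* sh) + h * ch / (2* sh^2)"
      by (simp add: \<Phi>1_def bh ch_def sh_def)
    have al: "-(\<Phi>1 a + \<Phi>1 b) = (ch + 1) * P"
      unfolding p1a p1b P_def using shnz xi by (simp add: field_simps power2_eq_square)
    have be: "\<Psi> a - \<Psi> b = (ch - 1) * P / \<xi>^2"
      unfolding \<Psi>_def p1a p1b P_def using shnz xi
      by (simp add: bh ch_def[symmetric] field_simps power2_eq_square)
    have chp: "ch + 1 > 0" using cosh_real_ge_1[of "\<xi>*h"] by (simp add: ch_def)
    show "-(\<Phi>1 a + \<Phi>1 b) > 0" unfolding al using chp Ppos by simp
    have key: "4 * (ch - 1) \<le> (\<xi>*h)\<^sup>2 * (ch + 1)" unfolding ch_def by (rule cosh_key_ineq)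
    have "(ch - 1) / \<xi>^2 \<le> h^2/4 * (ch + 1)"
      using key xi by (simp add: field_simps power_mult_distrib)
    then have "(ch - 1) / \<xi>^2 * P \<le> h^2/4 * (ch + 1) * P"
      using Ppos by (intro mult_right_mono) auto
    then show "\<Psi> a - \<Psi> b \<le> (b-a)^2/4 * (-(\<Phi>1 a + \<Phi>1 b))"
      unfolding al be by (simp add: h_def[symmetric] field_simps)
  qed
  then show ?thesis by blast
qed




definition ichain :: "(nat \<Rightarrow> real \<Rightarrow> real) \<Rightarrow> real \<Rightarrow> real \<Rightarrow> bool" where
  "ichain e a b \<longleftrightarrow> (\<forall>i<4. \<forall>y\<in>{a..b}. (e i has_real_derivative e (Suc i) y) (at y within {a..b}))"

lemma endpoint_left_pos:
  fixes e :: "nat \<Rightarrow> real \<Rightarrow> real"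
  assumes ab: "a < b" and ic: "ichain e a b"
    and ea: "e 0 a = 0" and eb: "e 0 b = 0" and M: "M \<ge> 0"
    and fb: "\<And>y. y \<in> {a..b} \<Longrightarrow> e 4 y - 2 * \<xi>^2 * e 2 y + \<xi>^4 * e 0 y \<le> M"
    and sa: "\<bar>e 2 b - \<xi>^2 * e 0 b\<bar> \<le> e 2 a - \<xi>^2 * e 0 a"
    and big: "(b - a)^2 / 4 * M < e 2 a - \<xi>^2 * e 0 a"
  shows "e 1 a < 0"
proof -
  obtain K K1 \<Phi> \<Phi>1 \<Psi> where T: "testok \<xi> a b K K1 \<Phi> \<Phi>1 \<Psi>"
  proof -
    have "\<exists>K K1 \<Phi> \<Phi>1 \<Psi>. testok \<xi> a b K K1 \<Phi> \<Phi>1 \<Psi>"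
    proof (cases "\<xi> = 0")
      case True then show ?thesis using testfun_zero[OF ab] by simp
    next
      case False then show ?thesis using testfun_nonzero[OF ab False] by simp
    qed
    then show ?thesis using that by blast
  qed
  note T' = T[unfolded testok_def]
  have Pneg: "\<Phi> y \<le> 0" if y: "y \<in> {a..b}" for y
  proof (rule max_principle[of a b "\<xi>^2" \<Phi> \<Phi>1 "\<lambda>y. \<xi>^2 * \<Phi> y + K y"])
    show "a < b" "0 \<le> \<xi>^2" using ab by auto
    show "(\<Phi> has_real_derivative \<Phi>1 t) (at t within {a..b})" for t
      using T' by (auto intro: has_field_derivative_at_within)
    show "(\<Phi>1 has_real_derivative \<xi>^2 * \<Phi> t + K t) (at t within {a..b})" for t
      using T' by (auto intro: has_field_derivative_at_within)
    show "\<xi>^2 * \<Phi> t \<le> \<xi>^2 * \<Phi> t + K t" if "a < t" "t < b" for t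
      using T' that by auto
    show "\<Phi> a \<le> 0" "\<Phi> b \<le> 0" "y \<in> {a..b}" using T' y by auto
  qed
  have P1b: "\<Phi>1 b \<ge> 0"
  proof (rule ccontr)
    assume "\<not> \<Phi>1 b \<ge> 0"
    then have "\<Phi>1 b < 0" by simp
    then obtain d where d: "d > 0" "\<And>h. h > 0 \<Longrightarrow> h < d \<Longrightarrow> \<Phi> b < \<Phi> (b - h)"
    proof -
      have der: "(\<Phi> has_real_derivative \<Phi>1 b) (at b)" using T' by blast
      show ?thesis using DERIV_neg_dec_left[OF der \<open>\<Phi>1 b < 0\<close>] that by blast
    qed
    define h where "h = min d (b - a) / 2"
    have h: "h > 0" "h < d" "b - h \<in> {a..b}" using d ab by (auto simp: h_def min_def field_simps)
    have "\<Phi> b < \<Phi> (b - h)" using d(2) h by auto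
    moreover have "\<Phi> (b - h) \<le> 0" using Pneg h by auto
    ultimately show False using T' by simp
  qed
  have core_ineq: "e 1 a \<le> \<Phi>1 a * (e 2 a - \<xi>^2 * e 0 a) - \<Phi>1 b * (e 2 b - \<xi>^2 * e 0 b) + M * (\<Psi> a - \<Psi> b)"
  proof (rule core[where K=K and ?K1.0=K1 and \<Phi>=\<Phi> and ?\<Phi>1.0=\<Phi>1 and \<Psi>=\<Psi>, OF ab _ _ _ _ _ _ _ _ _ _ Pneg ea eb fb])
    show "(e i has_real_derivative e (Suc i) y) (at y within {a..b})" if "i < 4" "y \<in> {a..b}" for i y
      using ic that by (auto simp: ichain_def)
  qed (use T' in auto)
  define m where "m = e 2 a - \<xi>^2 * e 0 a"
  define sb where "sb = e 2 b - \<xi>^2 * e 0 b"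
  define \<alpha> where "\<alpha> = -(\<Phi>1 a + \<Phi>1 b)"
  have al: "\<alpha> > 0" and be: "\<Psi> a - \<Psi> b \<le> (b-a)^2/4 * \<alpha>" using T' by (auto simp: \<alpha>_def)
  have "- \<Phi>1 b * sb \<le> \<Phi>1 b * m"
  proof -
    have "- sb \<le> m" using sa by (simp add: sb_def m_def)
    then have "\<Phi>1 b * (- sb) \<le> \<Phi>1 b * m" using P1b by (intro mult_left_mono) auto
    then show ?thesis by simp
  qed
  moreover have "M * (\<Psi> a - \<Psi> b) \<le> M * ((b-a)^2/4 * \<alpha>)" using M be by (intro mult_left_mono) auto
  moreover have "e 1 a \<le> \<Phi>1 a * m - \<Phi>1 b * sb + M*(\<Psi> a - \<Psi> b)"
    using core_ineq by (simp add: m_def sb_def)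
  moreover have "-\<alpha>*m = \<Phi>1 a * m + \<Phi>1 b * m" by (simp add: \<alpha>_def algebra_simps)
  ultimately have "e 1 a \<le> - \<alpha> * m + M * ((b-a)^2/4 * \<alpha>)"
    by linarith
  also have "\<dots> = - \<alpha> * (m - (b-a)^2/4 * M)" by (simp add: algebra_simps)
  also have "\<dots> < 0" using al big by (simp add: m_def mult_pos_pos)
  finally show ?thesis .
qed




lemma ichain_neg: "ichain e a b \<Longrightarrow> ichain (\<lambda>i y. - e i y) a b"
  unfolding ichain_def by (auto intro!: derivative_eq_intros)

lemma ichain_refl:
  assumes "ichain e a b"
  shows "ichain (\<lambda>i y. (-1)^i * e i (a + b - y)) a b"
  unfolding ichain_def
proof (intro allI impI ballI)
  fix i :: nat and y :: real assume i: "i < 4" and y: "y \<in> {a..b}"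
  have img: "(\<lambda>y. a + b - y) ` {a..b} = {a..b}"
  proof
    show "(\<lambda>y. a + b - y) ` {a..b} \<subseteq> {a..b}" by auto
    show "{a..b} \<subseteq> (\<lambda>y. a + b - y) ` {a..b}"
    proof
      fix x assume "x \<in> {a..b}"
      then show "x \<in> (\<lambda>y. a + b - y) ` {a..b}" by (intro image_eqI[of _ _ "a + b - x"]) auto
    qed
  qed
  have g: "((\<lambda>y. a + b - y) has_real_derivative -1) (at y within {a..b})"
    by (auto intro!: derivative_eq_intros)
  have f: "(e i has_real_derivative e (Suc i) (a + b - y)) (at (a + b - y) within (\<lambda>y. a + b - y) ` {a..b})"
    using assms i y unfolding ichain_def img by auto
  have "(e i \<circ> (\<lambda>y. a + b - y) has_real_derivative e (Suc i) (a + b - y) * -1) (at y within {a..b})"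
    by (rule DERIV_image_chain[OF f g])
  then have "((\<lambda>y. (-1)^i * (e i \<circ> (\<lambda>y. a + b - y)) y) has_real_derivative (-1)^i * (e (Suc i) (a + b - y) * -1)) (at y within {a..b})"
    by (rule DERIV_cmult)
  then show "((\<lambda>y. (-1)^i * e i (a + b - y)) has_real_derivative (-1)^(Suc i) * e (Suc i) (a + b - (y::real))) (at y within {a..b})"
    by (simp add: o_def)
qed

lemma endpoint_left:
  fixes e :: "nat \<Rightarrow> real \<Rightarrow> real"
  assumes ab: "a < b" and ic: "ichain e a b"
    and ea: "e 0 a = 0" and eb: "e 0 b = 0"
    and fb: "\<And>y. y \<in> {a..b} \<Longrightarrow> \<bar>e 4 y - 2 * \<xi>^2 * e 2 y + \<xi>^4 * e 0 y\<bar> \<le> M"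
    and sa: "\<bar>e 2 b - \<xi>^2 * e 0 b\<bar> \<le> \<bar>e 2 a - \<xi>^2 * e 0 a\<bar>"
    and big: "(b - a)^2 / 4 * M < \<bar>e 2 a - \<xi>^2 * e 0 a\<bar>"
  shows "e 1 a * (e 2 a - \<xi>^2 * e 0 a) < 0"
proof -
  have M: "M \<ge> 0" using fb[of a] ab by force
  have ge: "0 \<le> (b - a)^2 / 4 * M" using M by simp
  show ?thesis
  proof (cases "e 2 a - \<xi>^2 * e 0 a \<ge> 0")
    case True
    have "e 1 a < 0"
      by (rule endpoint_left_pos[OF ab ic ea eb M, of \<xi>]) (use fb sa big True in \<open>auto simp: abs_le_iff\<close>)
    moreover have "e 2 a - \<xi>^2 * e 0 a > 0" using True big ge by simp
    ultimately show ?thesis by (simp add: mult_neg_pos)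
  next
    case False
    have "(\<lambda>i y. - e i y) 1 a < 0"
      by (rule endpoint_left_pos[OF ab ichain_neg[OF ic] _ _ M, of \<xi>])
        (use fb sa big False ea eb in \<open>auto simp: abs_le_iff\<close>)
    moreover have "e 2 a - \<xi>^2 * e 0 a < 0" using False by simp
    ultimately show ?thesis by (simp add: mult_pos_neg)
  qed
qed

lemma endpoint_right:
  fixes e :: "nat \<Rightarrow> real \<Rightarrow> real"
  assumes ab: "a < b" and ic: "ichain e a b"
    and ea: "e 0 a = 0" and eb: "e 0 b = 0"
    and fb: "\<And>y. y \<in> {a..b} \<Longrightarrow> \<bar>e 4 y - 2 * \<xi>^2 * e 2 y + \<xi>^4 * e 0 y\<bar> \<le> M"
    and sa: "\<bar>e 2 a - \<xi>^2 * e 0 a\<bar> \<le> \<bar>e 2 b - \<xi>^2 * e 0 b\<bar>"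
    and big: "(b - a)^2 / 4 * M < \<bar>e 2 b - \<xi>^2 * e 0 b\<bar>"
  shows "e 1 b * (e 2 b - \<xi>^2 * e 0 b) > 0"
proof -
  let ?e = "\<lambda>i y. (-1)^i * e i (a + b - y)"
  have "?e 1 a * (?e 2 a - \<xi>^2 * ?e 0 a) < 0"
  proof (rule endpoint_left[OF ab ichain_refl[OF ic]])
    fix y assume y: "y \<in> {a..b}"
    then have "a + b - y \<in> {a..b}" by auto
    from fb[OF this] show "\<bar>?e 4 y - 2 * \<xi>^2 * ?e 2 y + \<xi>^4 * ?e 0 y\<bar> \<le> M" by simp
  qed (use ea eb sa big in auto)
  then show ?thesis by simp
qed




lemma quad_bound:
  fixes u0 u1 u2 :: "real \<Rightarrow> real"
  assumes ab: "a < b" and c: "c \<ge> 0" and B: "B \<ge> 0" and A: "A \<ge> 0"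
    and d1: "\<And>y. y \<in> {a..b} \<Longrightarrow> (u0 has_real_derivative u1 y) (at y within {a..b})"
    and d2: "\<And>y. y \<in> {a..b} \<Longrightarrow> (u1 has_real_derivative u2 y) (at y within {a..b})"
    and P: "\<And>y. y \<in> {a..b} \<Longrightarrow> u2 y - c * u0 y \<ge> - B"
    and ua: "u0 a \<le> A" and ub: "u0 b \<le> A"
    and y: "y \<in> {a..b}"
  shows "u0 y \<le> A + B * ((y - a) * (b - y) / 2)"
proof -
  have "(\<lambda>t. u0 t - A - B * ((t - a) * (b - t) / 2)) y \<le> 0"
  proof (rule max_principle[where ?u0.0 = "\<lambda>t. u0 t - A - B * ((t - a) * (b - t) / 2)" and ?u1.0 = "\<lambda>t. u1 t - B * ((a + b - 2 * t) / 2)"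
        and ?u2.0 = "\<lambda>t. u2 t + B", OF ab c])
    show "((\<lambda>t. u0 t - A - B * ((t - a) * (b - t) / 2)) has_real_derivative u1 t - B * ((a + b - 2 * t) / 2))
        (at t within {a..b})" if "t \<in> {a..b}" for t
      by (auto intro!: derivative_eq_intros d1[OF that] simp: field_simps)
    show "((\<lambda>t. u1 t - B * ((a + b - 2 * t) / 2)) has_real_derivative u2 t + B) (at t within {a..b})"
      if "t \<in> {a..b}" for t
      by (auto intro!: derivative_eq_intros d2[OF that] simp: algebra_simps)
    show "c * (u0 t - A - B * ((t - a) * (b - t) / 2)) \<le> u2 t + B" if t: "a < t" "t < b" for t
    proof -
      have "0 \<le> B * ((t - a) * (b - t) / 2)" using B t by simp
      then have "0 \<le> c * (B * ((t - a) * (b - t) / 2))" using c by simp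
      moreover have "0 \<le> c * A" using c A by simp
      moreover have "u2 t - c * u0 t \<ge> - B" using P t by auto
      moreover have "c * (u0 t - A - B * ((t - a) * (b - t) / 2)) = c * u0 t - c * A - c * (B * ((t - a) * (b - t) / 2))"
        by (simp add: algebra_simps)
      ultimately show ?thesis by linarith
    qed
  qed (use ua ub y in auto)
  then show ?thesis by simp
qed

lemma q_le: "y \<in> {a..b} \<Longrightarrow> (y - a) * (b - y) / 2 \<le> (b - a)^2 / (8::real)"
proof -
  assume "y \<in> {a..b}"
  have "0 \<le> (2*y - a - b)^2" by simp
  then show ?thesis by (simp add: power2_eq_square algebra_simps divide_simps)
qed

lemma interior_bound:
  fixes e :: "nat \<Rightarrow> real \<Rightarrow> real"
  assumes ab: "a < b" and ic: "ichain e a b"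
    and ea: "e 0 a = 0" and eb: "e 0 b = 0"
    and fb: "\<And>y. y \<in> {a..b} \<Longrightarrow> \<bar>e 4 y - 2 * \<xi>^2 * e 2 y + \<xi>^4 * e 0 y\<bar> \<le> M"
    and sa: "\<bar>e 2 a - \<xi>^2 * e 0 a\<bar> \<le> A" and sb: "\<bar>e 2 b - \<xi>^2 * e 0 b\<bar> \<le> A"
    and y: "y \<in> {a..b}"
  shows "\<bar>e 0 y\<bar> \<le> (b - a)^2 / 8 * (A + (b - a)^2 / 8 * M)"
proof -
  have M: "M \<ge> 0" using fb[of a] ab by force
  have A: "A \<ge> 0" using sa by linarith
  have ch: "(e i has_real_derivative e (Suc i) t) (at t within {a..b})" if "i < 4" "t \<in> {a..b}" for i t
    using ic that by (auto simp: ichain_def)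
  have e0: "(e 0 has_real_derivative e 1 t) (at t within {a..b})" if "t \<in> {a..b}" for t
    using ch[of 0 t] that by (simp add: numeral_eq_Suc)
  have e1: "(e 1 has_real_derivative e 2 t) (at t within {a..b})" if "t \<in> {a..b}" for t
    using ch[of 1 t] that by (simp add: numeral_eq_Suc)
  have e1': "(e (Suc 0) has_real_derivative e 2 t) (at t within {a..b})" if "t \<in> {a..b}" for t
    using e1[OF that] by simp
  have e2: "(e 2 has_real_derivative e 3 t) (at t within {a..b})" if "t \<in> {a..b}" for t
    using ch[of 2 t] that by (simp add: numeral_eq_Suc)
  have e3: "(e 3 has_real_derivative e 4 t) (at t within {a..b})" if "t \<in> {a..b}" for t
    using ch[of 3 t] that by (simp add: numeral_eq_Suc)
  define S where "S = A + (b - a)^2 / 8 * M"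
  have sbound: "\<bar>e 2 t - \<xi>^2 * e 0 t\<bar> \<le> S" if t: "t \<in> {a..b}" for t
  proof -
    have "e 2 t - \<xi>^2 * e 0 t \<le> A + M * ((t - a) * (b - t) / 2)"
    proof (rule quad_bound[OF ab _ M A, of "\<xi>^2" _ "\<lambda>t. e 3 t - \<xi>^2 * e 1 t" "\<lambda>t. e 4 t - \<xi>^2 * e 2 t"])
      show "((\<lambda>t. e 2 t - \<xi>^2 * e 0 t) has_real_derivative e 3 t - \<xi>^2 * e 1 t) (at t within {a..b})"
        if "t \<in> {a..b}" for t by (auto intro!: derivative_eq_intros e0 e2 that)
      show "((\<lambda>t. e 3 t - \<xi>^2 * e 1 t) has_real_derivative e 4 t - \<xi>^2 * e 2 t) (at t within {a..b})"
        if "t \<in> {a..b}" for t by (auto intro!: derivative_eq_intros e1 e1' e3 that)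
      show "e 4 t - \<xi>^2 * e 2 t - \<xi>^2 * (e 2 t - \<xi>^2 * e 0 t) \<ge> - M" if "t \<in> {a..b}" for t
        using fb[OF that] by (simp add: algebra_simps power2_eq_square power4_eq_xxxx abs_le_iff)
    qed (use sa sb t in auto)
    moreover have "- (e 2 t - \<xi>^2 * e 0 t) \<le> A + M * ((t - a) * (b - t) / 2)"
    proof (rule quad_bound[OF ab _ M A, of "\<xi>^2" _ "\<lambda>t. - (e 3 t - \<xi>^2 * e 1 t)" "\<lambda>t. - (e 4 t - \<xi>^2 * e 2 t)"])
      show "((\<lambda>t. - (e 2 t - \<xi>^2 * e 0 t)) has_real_derivative - (e 3 t - \<xi>^2 * e 1 t)) (at t within {a..b})"
        if "t \<in> {a..b}" for t by (auto intro!: derivative_eq_intros e0 e2 that)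
      show "((\<lambda>t. - (e 3 t - \<xi>^2 * e 1 t)) has_real_derivative - (e 4 t - \<xi>^2 * e 2 t)) (at t within {a..b})"
        if "t \<in> {a..b}" for t by (auto intro!: derivative_eq_intros e1 e1' e3 that)
      show "- (e 4 t - \<xi>^2 * e 2 t) - \<xi>^2 * (- (e 2 t - \<xi>^2 * e 0 t)) \<ge> - M" if "t \<in> {a..b}" for t
        using fb[OF that] by (simp add: algebra_simps power2_eq_square power4_eq_xxxx abs_le_iff)
    qed (use sa sb t in auto)
    moreover have "M * ((t - a) * (b - t) / 2) \<le> M * ((b - a)^2 / 8)"
      using q_le[OF t] M by (intro mult_left_mono)
    moreover have "M * ((b - a)^2 / 8) = (b-a)^2/8 * M" by simp
    ultimately show ?thesis unfolding S_def abs_le_iff by linarith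
  qed
  have S: "S \<ge> 0" using A M by (simp add: S_def)
  have "e 0 y \<le> 0 + S * ((y - a) * (b - y) / 2)"
  proof (rule quad_bound[OF ab _ S order_refl, of "\<xi>^2" _ "e 1" "\<lambda>t. e 2 t"])
    show "e 2 t - \<xi>^2 * e 0 t \<ge> - S" if "t \<in> {a..b}" for t using sbound[OF that] by simp
  qed (use e0 e1 ea eb y in auto)
  moreover have "- e 0 y \<le> 0 + S * ((y - a) * (b - y) / 2)"
  proof (rule quad_bound[OF ab _ S order_refl, of "\<xi>^2" _ "\<lambda>t. - e 1 t" "\<lambda>t. - e 2 t"])
    show "((\<lambda>t. - e 0 t) has_real_derivative - e 1 t) (at t within {a..b})" if "t \<in> {a..b}" for t
      by (auto intro!: derivative_eq_intros e0 that)
    show "((\<lambda>t. - e 1 t) has_real_derivative - e 2 t) (at t within {a..b})" if "t \<in> {a..b}" for t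
      by (auto intro!: derivative_eq_intros e1 e1' that)
    show "- e 2 t - \<xi>^2 * (- e 0 t) \<ge> - S" if "t \<in> {a..b}" for t using sbound[OF that] by simp
  qed (use ea eb y in auto)
  moreover have "S * ((y - a) * (b - y) / 2) \<le> S * ((b - a)^2 / 8)"
    using q_le[OF y] S by (intro mult_left_mono)
  moreover have "S * ((b - a)^2 / 8) = (b-a)^2/8 * S" by simp
  ultimately show ?thesis unfolding S_def[symmetric] abs_le_iff by linarith
qed




lemma deriv_unique_Icc:
  fixes f :: "real \<Rightarrow> real"
  assumes "a < b" "x \<in> {a..b}"
    and "(f has_real_derivative d1) (at x within {a..b})"
    and "(f has_real_derivative d2) (at x within {a..b})"
  shows "d1 = d2"
proof -
  have "(f has_vector_derivative d1) (at x within cbox a b)" "(f has_vector_derivative d2) (at x within cbox a b)"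
    using assms by (auto simp: has_real_derivative_iff_has_vector_derivative cbox_interval)
  then show ?thesis using vector_derivative_unique_within_closed_interval[of a b x f d1 d2] assms
    by (simp add: cbox_interval)
qed

lemma Lchain_eval:
  "Lchain [\<xi>, \<xi>, -\<xi>, -\<xi>] D 0 t = D 4 t - 2 * \<xi>^2 * D 2 t + \<xi>^4 * D 0 t"
  by (simp add: numeral_eq_Suc algebra_simps power2_eq_square power4_eq_xxxx)

lemma ts_mono:
  fixes ts :: "nat \<Rightarrow> real"
  assumes inc: "\<forall>j. 1 \<le> j \<and> j < n \<longrightarrow> ts j < ts (Suc j)"
    and "1 \<le> i" "i \<le> j" "j \<le> n"
  shows "ts i \<le> ts j"
  using assms(3,4)
proof (induction j)
  case 0 then show ?case by simp
next
  case (Suc j)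
  show ?case
  proof (cases "i = Suc j")
    case True then show ?thesis by simp
  next
    case False
    then have "i \<le> j" using Suc by simp
    then have "ts i \<le> ts j" using Suc by simp
    moreover have "ts j < ts (Suc j)" using inc Suc \<open>i \<le> j\<close> assms(2) by auto
    ultimately show ?thesis by simp
  qed
qed

lemma ts_cover:
  fixes ts :: "nat \<Rightarrow> real"
  assumes inc: "\<forall>j. 1 \<le> j \<and> j < n \<longrightarrow> ts j < ts (Suc j)" and n: "n \<ge> 2"
    and t: "t \<in> {ts 1..ts n}"
  shows "\<exists>j. 1 \<le> j \<and> j < n \<and> t \<in> {ts j..ts (Suc j)}"
proof -
  define J where "J = {k. 1 \<le> k \<and> k < n \<and> ts k \<le> t}"
  have fin: "finite J" unfolding J_def by (rule finite_subset[of _ "{..<n}"]) auto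
  have "1 \<in> J" using n t by (auto simp: J_def)
  then have ne: "J \<noteq> {}" by auto
  define j where "j = Max J"
  have jJ: "j \<in> J" using Max_in[OF fin ne] by (simp add: j_def)
  then have j: "1 \<le> j" "j < n" "ts j \<le> t" by (auto simp: J_def)
  have "t \<le> ts (Suc j)"
  proof (cases "Suc j = n")
    case True then show ?thesis using t by simp
  next
    case False
    then have "Suc j < n" using j by simp
    show ?thesis
    proof (rule ccontr)
      assume "\<not> t \<le> ts (Suc j)"
      then have "Suc j \<in> J" using \<open>Suc j < n\<close> by (auto simp: J_def)
      then have "Suc j \<le> j" using Max_ge[OF fin] by (simp add: j_def)
      then show False by simp
    qed
  qed
  then show ?thesis using j by auto
qed




theorem mainTheorem1:
  fixes \<xi> :: real and n :: nat and ts :: "nat \<Rightarrow> real"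
    and F g :: "real \<Rightarrow> real" and DF :: "nat \<Rightarrow> real \<Rightarrow> real"
  assumes "n \<ge> 2"
    and "\<forall>j. 1 \<le> j \<and> j < n \<longrightarrow> ts j < ts (Suc j)"
    and "deriv_chain 4 {ts 1..ts n} F DF"
    and "exp_spline [\<xi>, \<xi>, -\<xi>, -\<xi>] ts n g"
    and "\<forall>j. 1 \<le> j \<and> j \<le> n \<longrightarrow> g (ts j) = F (ts j)"
    and "(g has_real_derivative DF 1 (ts 1)) (at (ts 1) within {ts 1..ts n})"
    and "(g has_real_derivative DF 1 (ts n)) (at (ts n) within {ts 1..ts n})"
  shows "\<forall>t\<in>{ts 1..ts n}. \<bar>F t - g t\<bar> \<le>
           5 / 64 * (Max {ts (Suc j) - ts j | j. 1 \<le> j \<and> j < n}) ^ 4 *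
           (SUP \<theta>\<in>{ts 1..ts n}. \<bar>Lchain [\<xi>, \<xi>, -\<xi>, -\<xi>] DF 0 \<theta>\<bar>)"
proof -
  note n = assms(1) and inc = assms(2)
  define S where "S = {ts 1..ts n}"
  have mono: "ts i \<le> ts j" if "1 \<le> i" "i \<le> j" "j \<le> n" for i j
    using ts_mono[OF inc that] .
  have t1n: "ts 1 < ts n"
  proof -
    have "ts 1 < ts 2" using inc n by (auto simp: numeral_2_eq_2)
    moreover have "ts 2 \<le> ts n" using mono[of 2 n] n by simp
    ultimately show ?thesis by simp
  qed
  have knot: "ts j \<in> S" if "1 \<le> j" "j \<le> n" for j
    using mono[of 1 j] mono[of j n] that by (auto simp: S_def)
  have sub: "{ts j..ts (Suc j)} \<subseteq> S" if "1 \<le> j" "j < n" for j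
    using knot[of j] knot[of "Suc j"] that by (auto simp: S_def)
  have ordj: "ts j < ts (Suc j)" if "1 \<le> j" "j < n" for j using inc that by auto
  have DF0: "DF 0 x = F x" if "x \<in> S" for x using assms(3) that by (auto simp: deriv_chain_def S_def)
  have DFd: "(DF i has_real_derivative DF (Suc i) x) (at x within S)" if "i < 4" "x \<in> S" for i x
    using assms(3) that by (auto simp: deriv_chain_def S_def)
  have DF4c: "continuous_on S (DF 4)" using assms(3) by (auto simp: deriv_chain_def S_def)
  have "Ck (length [\<xi>, \<xi>, -\<xi>, -\<xi>] - 2) S g" using assms(4) unfolding exp_spline_def S_def by blast
  moreover have "length [\<xi>, \<xi>, -\<xi>, -\<xi>] - 2 = 2" by simp
  ultimately have "Ck 2 S g" by metis
  then obtain Dg where Dg: "deriv_chain 2 S g Dg"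
    unfolding Ck_def by blast
  have Dg0: "Dg 0 x = g x" if "x \<in> S" for x using Dg that by (auto simp: deriv_chain_def)
  have Dgd: "(Dg i has_real_derivative Dg (Suc i) x) (at x within S)" if "i < 2" "x \<in> S" for i x
    using Dg that by (auto simp: deriv_chain_def)
  have pieces: "\<exists>h. Espace [\<xi>, \<xi>, -\<xi>, -\<xi>] h \<and> (\<forall>t\<in>{ts j..ts (Suc j)}. g t = h t)"
    if "1 \<le> j" "j < n" for j using assms(4) that by (auto simp: exp_spline_def)
  define LF where "LF = (\<lambda>\<theta>. Lchain [\<xi>, \<xi>, -\<xi>, -\<xi>] DF 0 \<theta>)"
  have LFe: "LF \<theta> = DF 4 \<theta> - 2 * \<xi>^2 * DF 2 \<theta> + \<xi>^4 * DF 0 \<theta>" for \<theta>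
    unfolding LF_def by (rule Lchain_eval)
  define Mv where "Mv = (SUP \<theta>\<in>S. \<bar>LF \<theta>\<bar>)"
  have contLF: "continuous_on S (\<lambda>\<theta>. \<bar>LF \<theta>\<bar>)"
  proof -
    have c0: "continuous_on S (DF 0)" by (rule DERIV_continuous_on[OF DFd[of 0]]) auto
    have c2: "continuous_on S (DF 2)" by (rule DERIV_continuous_on[OF DFd[of 2]]) auto
    show ?thesis unfolding LFe by (intro continuous_intros c0 c2 DF4c)
  qed
  have bdd: "bdd_above ((\<lambda>\<theta>. \<bar>LF \<theta>\<bar>) ` S)"
    using compact_continuous_image[OF contLF] by (auto simp: S_def intro: bounded_imp_bdd_above compact_imp_bounded)
  have LFb: "\<bar>LF \<theta>\<bar> \<le> Mv" if "\<theta> \<in> S" for \<theta>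
    unfolding Mv_def using bdd that by (rule cSUP_upper2) auto
  have Mv0: "Mv \<ge> 0" using LFb[of "ts 1"] knot[of 1] n by force
  define \<Delta> where "\<Delta> = Max {ts (Suc j) - ts j | j. 1 \<le> j \<and> j < n}"
  have finD: "finite {ts (Suc j) - ts j | j. 1 \<le> j \<and> j < n}"
  proof -
    have "{ts (Suc j) - ts j | j. 1 \<le> j \<and> j < n} = (\<lambda>j. ts (Suc j) - ts j) ` {j. 1 \<le> j \<and> j < n}" by auto
    moreover have "finite {j. 1 \<le> j \<and> j < n}" by (rule finite_subset[of _ "{..<n}"]) auto
    ultimately show ?thesis by simp
  qed
  have gapD: "ts (Suc j) - ts j \<le> \<Delta>" if "1 \<le> j" "j < n" for j
    unfolding \<Delta>_def by (rule Max_ge[OF finD]) (use that in auto)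
  define E1 where "E1 = (\<lambda>x. DF 1 x - Dg 1 x)"
  define sg where "sg = (\<lambda>x. (DF 2 x - Dg 2 x) - \<xi>^2 * (F x - g x))"
  have piece: "\<exists>e. ichain e (ts j) (ts (Suc j)) \<and> e 0 (ts j) = 0 \<and> e 0 (ts (Suc j)) = 0 \<and>
      (\<forall>y\<in>{ts j..ts (Suc j)}. \<bar>e 4 y - 2 * \<xi>^2 * e 2 y + \<xi>^4 * e 0 y\<bar> \<le> Mv) \<and>
      (\<forall>y\<in>{ts j..ts (Suc j)}. e 0 y = F y - g y \<and> e 1 y = E1 y \<and> e 2 y - \<xi>^2 * e 0 y = sg y)"
    if j: "1 \<le> j" "j < n" for j
  proof -
    define a where "a = ts j"
    define b where "b = ts (Suc j)"
    have ab: "a < b" using ordj[OF j] by (simp add: a_def b_def)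
    have T: "{a..b} \<subseteq> S" using sub[OF j] by (simp add: a_def b_def)
    obtain h where hE: "Espace [\<xi>, \<xi>, -\<xi>, -\<xi>] h" and gh: "\<forall>t\<in>{a..b}. g t = h t"
      using pieces[OF j] by (auto simp: a_def b_def)
    have l4: "length [\<xi>, \<xi>, -\<xi>, -\<xi>] = 4" by simp
    have "\<exists>D. deriv_chain (length [\<xi>, \<xi>, -\<xi>, -\<xi>]) UNIV h D \<and> (\<forall>t. Lchain [\<xi>, \<xi>, -\<xi>, -\<xi>] D 0 t = 0)"
      using hE unfolding Espace_def .
    then obtain Dh where Dh: "deriv_chain 4 UNIV h Dh" and Lh: "\<forall>t. Lchain [\<xi>, \<xi>, -\<xi>, -\<xi>] Dh 0 t = 0"
      unfolding l4 by blast
    have Dh0: "Dh 0 x = h x" for x using Dh by (auto simp: deriv_chain_def)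
    have Dhd: "(Dh i has_real_derivative Dh (Suc i) x) (at x within {a..b})" if "i < 4" for i x
      using Dh that by (auto simp: deriv_chain_def intro: has_field_derivative_at_within)
    have eq0: "Dg 0 x = Dh 0 x" if "x \<in> {a..b}" for x using that T Dg0 gh Dh0 by auto
    have eq1: "Dg 1 x = Dh 1 x" if x: "x \<in> {a..b}" for x
    proof -
      have "(Dg 0 has_real_derivative Dg 1 x) (at x within {a..b})"
        using DERIV_subset[OF Dgd[of 0 x] T] x T by auto
      then have "(Dh 0 has_real_derivative Dg 1 x) (at x within {a..b})"
        by (rule has_field_derivative_transform_within[where d=1]) (use x eq0 in auto)
      then show ?thesis using deriv_unique_Icc[OF ab x _ Dhd[of 0 x]] by simp
    qed
    have eq2: "Dg 2 x = Dh 2 x" if x: "x \<in> {a..b}" for x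
    proof -
      have "(Dg 1 has_real_derivative Dg 2 x) (at x within {a..b})"
        using DERIV_subset[OF Dgd[of 1 x] T] x T by (auto simp: numeral_2_eq_2)
      then have "(Dh 1 has_real_derivative Dg 2 x) (at x within {a..b})"
        by (rule has_field_derivative_transform_within[where d=1]) (use x eq1 in auto)
      then show ?thesis using deriv_unique_Icc[OF ab x _ Dhd[of 1 x]] by (simp add: numeral_2_eq_2)
    qed
    define e where "e = (\<lambda>i y. DF i y - Dh i y)"
    have ic: "ichain e a b"
      unfolding ichain_def e_def
    proof (intro allI impI ballI)
      fix i y assume i: "i < (4::nat)" and y: "y \<in> {a..b}"
      have "(DF i has_real_derivative DF (Suc i) y) (at y within {a..b})"
        using DERIV_subset[OF DFd[OF i] T] y T by auto
      then show "((\<lambda>y. DF i y - Dh i y) has_real_derivative DF (Suc i) y - Dh (Suc i) y) (at y within {a..b})"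
        by (intro derivative_intros Dhd i)
    qed
    have e0: "e 0 y = F y - g y" if "y \<in> {a..b}" for y
      using that T DF0 gh Dh0 by (auto simp: e_def)
    have e1: "e 1 y = E1 y" if "y \<in> {a..b}" for y using eq1[OF that] by (simp add: e_def E1_def)
    have e2: "e 2 y - \<xi>^2 * e 0 y = sg y" if "y \<in> {a..b}" for y
      using eq2[OF that] e0[OF that] by (simp add: e_def sg_def)
    have ea: "e 0 a = 0" using e0[of a] ab assms(5) j by (auto simp: a_def)
    have eb: "e 0 b = 0" using e0[of b] ab assms(5) j by (auto simp: b_def)
    have fb: "\<bar>e 4 y - 2 * \<xi>^2 * e 2 y + \<xi>^4 * e 0 y\<bar> \<le> Mv" if y: "y \<in> {a..b}" for y
    proof -
      have "e 4 y - 2 * \<xi>^2 * e 2 y + \<xi>^4 * e 0 y = LF y - Lchain [\<xi>, \<xi>, -\<xi>, -\<xi>] Dh 0 y"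
        unfolding LFe Lchain_eval e_def by (simp add: algebra_simps)
      also have "\<dots> = LF y" using Lh by simp
      finally show ?thesis using LFb y T by auto
    qed
    show ?thesis using ic ea eb fb e0 e1 e2 unfolding a_def b_def by blast
  qed
  have E1a: "E1 (ts 1) = 0"
  proof -
    have d: "(Dg 0 has_real_derivative Dg 1 (ts 1)) (at (ts 1) within S)"
      using Dgd[of 0 "ts 1"] knot[of 1] n by simp
    have "(g has_real_derivative Dg 1 (ts 1)) (at (ts 1) within S)"
      by (rule has_field_derivative_transform_within[OF d, where d=1])
         (use knot[of 1] n Dg0 in auto)
    then show ?thesis using deriv_unique_Icc[OF t1n _ _ assms(6)] knot[of 1] n
      by (auto simp: E1_def S_def)
  qed
  have E1b: "E1 (ts n) = 0"
  proof -
    have d: "(Dg 0 has_real_derivative Dg 1 (ts n)) (at (ts n) within S)"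
      using Dgd[of 0 "ts n"] knot[of n] n by simp
    have "(g has_real_derivative Dg 1 (ts n)) (at (ts n) within S)"
      by (rule has_field_derivative_transform_within[OF d, where d=1])
         (use knot[of n] n Dg0 in auto)
    then show ?thesis using deriv_unique_Icc[OF t1n _ _ assms(7)] knot[of n] n
      by (auto simp: E1_def S_def)
  qed
  define m where "m = Max ((\<lambda>k. \<bar>sg (ts k)\<bar>) ` {1..n})"
  have finK: "finite ((\<lambda>k. \<bar>sg (ts k)\<bar>) ` {1..n})" by simp
  have mge: "\<bar>sg (ts k)\<bar> \<le> m" if "1 \<le> k" "k \<le> n" for k
    unfolding m_def by (rule Max_ge[OF finK]) (use that in auto)
  obtain j where j: "1 \<le> j" "j \<le> n" "\<bar>sg (ts j)\<bar> = m"
  proof -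
    have "m \<in> (\<lambda>k. \<bar>sg (ts k)\<bar>) ` {1..n}" unfolding m_def by (rule Max_in[OF finK]) (use n in auto)
    then show ?thesis using that by auto
  qed
  have mbound: "m \<le> \<Delta>^2 / 4 * Mv"
  proof (rule ccontr)
    assume "\<not> m \<le> \<Delta>^2 / 4 * Mv"
    then have big: "\<Delta>^2 / 4 * Mv < m" by simp
    have right: "E1 (ts j) * sg (ts j) < 0" if jn: "j < n"
    proof -
      obtain e where e: "ichain e (ts j) (ts (Suc j))" "e 0 (ts j) = 0" "e 0 (ts (Suc j)) = 0"
        "\<forall>y\<in>{ts j..ts (Suc j)}. \<bar>e 4 y - 2 * \<xi>^2 * e 2 y + \<xi>^4 * e 0 y\<bar> \<le> Mv"
        "\<forall>y\<in>{ts j..ts (Suc j)}. e 0 y = F y - g y \<and> e 1 y = E1 y \<and> e 2 y - \<xi>^2 * e 0 y = sg y"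
        using piece[OF j(1) jn] by blast
      have ab: "ts j < ts (Suc j)" using ordj[OF j(1) jn] .
      have ya: "ts j \<in> {ts j..ts (Suc j)}" and yb: "ts (Suc j) \<in> {ts j..ts (Suc j)}" using ab by auto
      have "(ts (Suc j) - ts j)^2 \<le> \<Delta>^2"
        using gapD[OF j(1) jn] ab by (intro power_mono) auto
      then have "(ts (Suc j) - ts j)^2 / 4 * Mv \<le> \<Delta>^2 / 4 * Mv" using Mv0
        by (intro mult_right_mono) auto
      then have lt: "(ts (Suc j) - ts j)^2 / 4 * Mv < m" using big by linarith
      have sA: "e 2 (ts j) - \<xi>^2 * e 0 (ts j) = sg (ts j)" using e(5) ya by blast
      have sB: "e 2 (ts (Suc j)) - \<xi>^2 * e 0 (ts (Suc j)) = sg (ts (Suc j))" using e(5) yb by blast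
      have "e 1 (ts j) * (e 2 (ts j) - \<xi>^2 * e 0 (ts j)) < 0"
      proof (rule endpoint_left[OF ab e(1) e(2) e(3)])
        show "\<bar>e 4 y - 2 * \<xi>^2 * e 2 y + \<xi>^4 * e 0 y\<bar> \<le> Mv" if "y \<in> {ts j..ts (Suc j)}" for y
          using e(4) that by blast
        show "\<bar>e 2 (ts (Suc j)) - \<xi>^2 * e 0 (ts (Suc j))\<bar> \<le> \<bar>e 2 (ts j) - \<xi>^2 * e 0 (ts j)\<bar>"
          unfolding sA sB using mge[of "Suc j"] jn j by simp
        show "(ts (Suc j) - ts j)^2 / 4 * Mv < \<bar>e 2 (ts j) - \<xi>^2 * e 0 (ts j)\<bar>"
          unfolding sA using lt j by simp
      qed
      moreover have e1eq: "e 1 (ts j) = E1 (ts j)" using e(5) ya by auto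
      ultimately show ?thesis unfolding sA by simp
    qed
    have left: "E1 (ts j) * sg (ts j) > 0" if j1: "1 < j"
    proof -
      define i where "i = j - 1"
      have i: "1 \<le> i" "i < n" "Suc i = j" using j j1 by (auto simp: i_def)
      obtain e where e: "ichain e (ts i) (ts (Suc i))" "e 0 (ts i) = 0" "e 0 (ts (Suc i)) = 0"
        "\<forall>y\<in>{ts i..ts (Suc i)}. \<bar>e 4 y - 2 * \<xi>^2 * e 2 y + \<xi>^4 * e 0 y\<bar> \<le> Mv"
        "\<forall>y\<in>{ts i..ts (Suc i)}. e 0 y = F y - g y \<and> e 1 y = E1 y \<and> e 2 y - \<xi>^2 * e 0 y = sg y"
        using piece[OF i(1,2)] by blast
      have ab: "ts i < ts (Suc i)" using ordj[OF i(1,2)] .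
      have ya: "ts i \<in> {ts i..ts (Suc i)}" and yb: "ts (Suc i) \<in> {ts i..ts (Suc i)}" using ab by auto
      have "(ts (Suc i) - ts i)^2 \<le> \<Delta>^2"
        using gapD[OF i(1,2)] ab by (intro power_mono) auto
      then have "(ts (Suc i) - ts i)^2 / 4 * Mv \<le> \<Delta>^2 / 4 * Mv" using Mv0
        by (intro mult_right_mono) auto
      then have lt: "(ts (Suc i) - ts i)^2 / 4 * Mv < m" using big by linarith
      have sA: "e 2 (ts i) - \<xi>^2 * e 0 (ts i) = sg (ts i)" using e(5) ya by blast
      have sB: "e 2 (ts (Suc i)) - \<xi>^2 * e 0 (ts (Suc i)) = sg (ts (Suc i))" using e(5) yb by blast
      have "e 1 (ts (Suc i)) * (e 2 (ts (Suc i)) - \<xi>^2 * e 0 (ts (Suc i))) > 0"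
      proof (rule endpoint_right[OF ab e(1) e(2) e(3)])
        show "\<bar>e 4 y - 2 * \<xi>^2 * e 2 y + \<xi>^4 * e 0 y\<bar> \<le> Mv" if "y \<in> {ts i..ts (Suc i)}" for y
          using e(4) that by blast
        show "\<bar>e 2 (ts i) - \<xi>^2 * e 0 (ts i)\<bar> \<le> \<bar>e 2 (ts (Suc i)) - \<xi>^2 * e 0 (ts (Suc i))\<bar>"
          unfolding sA sB using mge[of i] i j by simp
        show "(ts (Suc i) - ts i)^2 / 4 * Mv < \<bar>e 2 (ts (Suc i)) - \<xi>^2 * e 0 (ts (Suc i))\<bar>"
          unfolding sB using lt i j by simp
      qed
      moreover have e1eq: "e 1 (ts (Suc i)) = E1 (ts (Suc i))" using e(5) yb by auto
      ultimately show ?thesis unfolding sB using i(3) by simp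
    qed
    show False
    proof (cases "j = 1")
      case True
      then show False using right E1a n by simp
    next
      case False
      then have j1: "1 < j" using j by simp
      show False
      proof (cases "j = n")
        case True then show False using left[OF j1] E1b by simp
      next
        case False then show False using left[OF j1] right j by fastforce
      qed
    qed
  qed
  have final: "\<bar>F t - g t\<bar> \<le> 5 / 64 * \<Delta> ^ 4 * Mv" if t: "t \<in> S" for t
  proof -
    obtain j where j: "1 \<le> j" "j < n" "t \<in> {ts j..ts (Suc j)}"
      using ts_cover[OF inc n] t by (auto simp: S_def)
    obtain e where e: "ichain e (ts j) (ts (Suc j))" "e 0 (ts j) = 0" "e 0 (ts (Suc j)) = 0"
      "\<forall>y\<in>{ts j..ts (Suc j)}. \<bar>e 4 y - 2 * \<xi>^2 * e 2 y + \<xi>^4 * e 0 y\<bar> \<le> Mv"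
      "\<forall>y\<in>{ts j..ts (Suc j)}. e 0 y = F y - g y \<and> e 1 y = E1 y \<and> e 2 y - \<xi>^2 * e 0 y = sg y"
      using piece[OF j(1,2)] by blast
    have ab: "ts j < ts (Suc j)" using ordj[OF j(1,2)] .
    have ya: "ts j \<in> {ts j..ts (Suc j)}" and yb: "ts (Suc j) \<in> {ts j..ts (Suc j)}" using ab by auto
    define H where "H = (ts (Suc j) - ts j)^2"
    define D2 where "D2 = \<Delta>^2"
    have HD: "H \<le> D2" unfolding H_def D2_def using gapD[OF j(1,2)] ab by (intro power_mono) auto
    have H0: "0 \<le> H" by (simp add: H_def)
    have sA: "e 2 (ts j) - \<xi>^2 * e 0 (ts j) = sg (ts j)" using e(5) ya by blast
    have sB: "e 2 (ts (Suc j)) - \<xi>^2 * e 0 (ts (Suc j)) = sg (ts (Suc j))" using e(5) yb by blast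
    have "\<bar>e 0 t\<bar> \<le> H / 8 * (m + H / 8 * Mv)" unfolding H_def
    proof (rule interior_bound[OF ab e(1) e(2) e(3)])
      show "\<bar>e 4 y - 2 * \<xi>^2 * e 2 y + \<xi>^4 * e 0 y\<bar> \<le> Mv" if "y \<in> {ts j..ts (Suc j)}" for y
        using e(4) that by blast
      show "\<bar>e 2 (ts j) - \<xi>^2 * e 0 (ts j)\<bar> \<le> m" unfolding sA using mge[of j] j by simp
      show "\<bar>e 2 (ts (Suc j)) - \<xi>^2 * e 0 (ts (Suc j))\<bar> \<le> m" unfolding sB using mge[of "Suc j"] j by simp
      show "t \<in> {ts j..ts (Suc j)}" using j by simp
    qed
    also have "\<dots> \<le> D2 / 8 * (3 / 8 * D2 * Mv)"
    proof (rule mult_mono)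
      show "H / 8 \<le> D2 / 8" using HD by simp
      have "H * Mv \<le> D2 * Mv" using HD Mv0 by (rule mult_right_mono)
      then show "m + H / 8 * Mv \<le> 3 / 8 * D2 * Mv" using mbound by (simp add: D2_def)
      show "0 \<le> D2 / 8" using H0 HD by simp
      have "\<bar>sg (ts j)\<bar> \<le> m" using mge[of j] j by simp
      then have "0 \<le> m" by (meson abs_ge_zero order_trans)
      moreover have "0 \<le> H / 8 * Mv" using H0 Mv0 by simp
      ultimately show "0 \<le> m + H / 8 * Mv" by linarith
    qed
    also have "\<dots> = 3 / 64 * \<Delta>^4 * Mv" by (simp add: D2_def power2_eq_square power4_eq_xxxx)
    also have "\<dots> \<le> 5 / 64 * \<Delta>^4 * Mv" using Mv0 by (intro mult_right_mono) auto
    finally show ?thesis using e(5) j(3) by simp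
  qed
  show ?thesis using final unfolding S_def \<Delta>_def Mv_def LF_def by blast
qed


end
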